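(* Let $V$ be a compact subset of $\mathcal{A}_0$ such that $V^T$ is complete. Then $$V^{**}=(V^T)^{\perp}.$$
   Context: $D=\{z:|z|<1\}$, $\overline D$ its closure. $\mathcal{A}$ is the space of functions $f(z)=\sum_{k\ge0}a_k(f)z^k$ analytic in $D$, with the topology of locally uniform convergence; $\mathcal{A}_0=\{f\in\mathcal{A}: a_0(f)=1\}$. $\mathcal{A}(\overline D)$ is the set of functions analytic in some disk $\{|z|<R\}$ with $R>1$, and $\mathcal{A}_0(\overline D)=\{g\in\mathcal{A}(\overline D):a_0(g)=1\}$. The Hadamard product is $(f*g)(z)=\sum_{k\ge0}a_k(f)a_k(g)z^k$. For $V\subset\mathcal{A}_0$, $V^*=\{g\in\mathcal{A}_0:(f*g)(z)\ne0 \ \forall z\in D,\ \forall f\in V\}$, $V^{**}=(V^* )^*$, and $V^T=\{g\in\mathcal{A}_0(\overline D): (f*g)(1)\ne0 \ \forall f\in V\}$. For $U\subset\mathcal{A}_0(\overline D)$, $U^{\perp}=\{h\in\mathcal{A}_0:(g*h)(1)\ne0\ \forall g\in U\}$. For $x\in\overline D$, $(P_xf)(z)=f(xz)$; a set $W$ is complete if $P_xf\in W$ for all $f\in W$, $x\in\overline D$. *)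

theory Defs
  imports "HOL-Analysis.Analysis"
begin

text \<open>Elements of the function spaces are represented by their Taylor coefficient
  sequences at 0:  a function f(z) = sum_k a_k z^k is the sequence a.\<close>

definition pser :: "(nat \<Rightarrow> complex) \<Rightarrow> complex \<Rightarrow> complex" where
  "pser a z = (\<Sum>k. a k * z ^ k)"

definition A_space :: "(nat \<Rightarrow> complex) set" where
  "A_space = {a. \<forall>z. norm z < 1 \<longrightarrow> summable (\<lambda>k. a k * z ^ k)}"

definition A0 :: "(nat \<Rightarrow> complex) set" where
  "A0 = {a \<in> A_space. a 0 = 1}"

definition A_cl :: "(nat \<Rightarrow> complex) set" where
  "A_cl = {a. \<exists>R>1. \<forall>z. norm z < R \<longrightarrow> summable (\<lambda>k. a k * z ^ k)}"

definition A0_cl :: "(nat \<Rightarrow> complex) set" where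
  "A0_cl = {a \<in> A_cl. a 0 = 1}"

definition hadamard :: "(nat \<Rightarrow> complex) \<Rightarrow> (nat \<Rightarrow> complex) \<Rightarrow> (nat \<Rightarrow> complex)" where
  "hadamard a b = (\<lambda>k. a k * b k)"

definition dual :: "(nat \<Rightarrow> complex) set \<Rightarrow> (nat \<Rightarrow> complex) set" where
  "dual V = {g \<in> A0. \<forall>f\<in>V. \<forall>z. norm z < 1 \<longrightarrow> pser (hadamard f g) z \<noteq> 0}"

definition dualT :: "(nat \<Rightarrow> complex) set \<Rightarrow> (nat \<Rightarrow> complex) set" where
  "dualT V = {g \<in> A0_cl. \<forall>f\<in>V. pser (hadamard f g) 1 \<noteq> 0}"

definition perp :: "(nat \<Rightarrow> complex) set \<Rightarrow> (nat \<Rightarrow> complex) set" where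
  "perp U = {h \<in> A0. \<forall>g\<in>U. pser (hadamard g h) 1 \<noteq> 0}"

text \<open>(P_x f)(z) = f(xz), i.e. coefficients a_k x^k.\<close>
definition Pop :: "complex \<Rightarrow> (nat \<Rightarrow> complex) \<Rightarrow> (nat \<Rightarrow> complex)" where
  "Pop x a = (\<lambda>k. a k * x ^ k)"

definition complete_set :: "(nat \<Rightarrow> complex) set \<Rightarrow> bool" where
  "complete_set W \<longleftrightarrow> (\<forall>f\<in>W. \<forall>x. norm x \<le> 1 \<longrightarrow> Pop x f \<in> W)"

definition loc_unif_lim :: "(nat \<Rightarrow> nat \<Rightarrow> complex) \<Rightarrow> (nat \<Rightarrow> complex) \<Rightarrow> bool" where
  "loc_unif_lim F f \<longleftrightarrow> (\<forall>r. 0 < r \<and> r < 1 \<longrightarrow>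
      uniform_limit (cball 0 r) (\<lambda>n z. pser (F n) z) (pser f) sequentially)"

text \<open>Compactness in A for the (metrizable) topology of locally uniform convergence,
  expressed as sequential compactness.\<close>
definition compact_A :: "(nat \<Rightarrow> complex) set \<Rightarrow> bool" where
  "compact_A V \<longleftrightarrow> V \<subseteq> A_space \<and>
     (\<forall>F::nat \<Rightarrow> nat \<Rightarrow> complex. (\<forall>n. F n \<in> V) \<longrightarrow>
        (\<exists>f\<in>V. \<exists>s::nat \<Rightarrow> nat. strict_mono s \<and> loc_unif_lim (F \<circ> s) f))"

end

theory Submission imports Defs "HOL-Complex_Analysis.Complex_Analysis" "HOL-Real_Asymp.Real_Asymp" begin

lemma A_space_conv_radius:
  assumes "a \<in> A_space" shows "conv_radius a \<ge> 1"
proof (rule conv_radius_geI_ex')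
  fix r :: real assume "0 < r" "ereal r < 1"
  then show "summable (\<lambda>n. a n * of_real r ^ n)" using assms by (auto simp: A_space_def)
qed

lemma coeff_bound:
  assumes a: "a \<in> A_space" and r: "0 < r" "r < 1"
    and B: "\<And>z. norm z = r \<Longrightarrow> norm (pser a z) \<le> B"
  shows "norm (a n) \<le> B / r ^ n"
proof -
  define F where "F = Abs_fps a"
  have rad: "fps_conv_radius F \<ge> 1"
    using A_space_conv_radius[OF a] by (simp add: F_def fps_conv_radius_def)
  have ev: "eval_fps F = pser a" by (simp add: F_def eval_fps_def pser_def fun_eq_iff)
  have sub: "cball (0::complex) r \<subseteq> eball 0 (fps_conv_radius F)"
  proof
    fix z :: complex assume "z \<in> cball 0 r"
    then have zz: "ereal (norm z) < 1" using r by auto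
    have "ereal (norm z) < fps_conv_radius F" using less_le_trans[OF zz rad] .
    then show "z \<in> eball 0 (fps_conv_radius F)" by (simp add: eball_def)
  qed
  have "a n = (deriv ^^ n) (eval_fps F) 0 / fact n"
    using fps_nth_conv_deriv[of F n] less_le_trans[OF _ rad, of 0] by (simp add: F_def)
  moreover have "norm ((deriv ^^ n) (eval_fps F) 0) \<le> fact n * B / r ^ n"
  proof (rule Cauchy_inequality)
    show "eval_fps F holomorphic_on ball 0 r"
      by (rule holomorphic_on_eval_fps) (use sub in auto)
    show "continuous_on (cball 0 r) (eval_fps F)"
      by (rule continuous_on_subset[OF continuous_on_eval_fps sub])
    show "0 < r" by fact
    fix x :: complex assume "norm (0 - x) = r"
    then show "norm (eval_fps F x) \<le> B" using B[of x] by (simp add: ev)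
  qed
  ultimately have "norm (a n) \<le> (fact n * B / r ^ n) / fact n"
    by (metis divide_right_mono norm_divide norm_fact fact_ge_zero)
  then show ?thesis by simp
qed

lemma summable_coeff_bound:
  fixes a :: "nat \<Rightarrow> complex" and z :: complex
  assumes "summable (\<lambda>k. a k * z ^ k)"
  shows "\<exists>C. \<forall>k. norm (a k) * norm z ^ k \<le> C"
proof -
  have "Bseq (\<lambda>k. a k * z ^ k)"
    using summable_LIMSEQ_zero[OF assms] by (intro convergent_imp_Bseq convergentI)
  then obtain K where "\<And>k. norm (a k * z ^ k) \<le> K" by (auto simp: Bseq_def)
  then show ?thesis by (metis norm_mult norm_power)
qed

lemma A_space_diff:
  assumes "a \<in> A_space" "b \<in> A_space" shows "(\<lambda>k. a k - b k) \<in> A_space"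
  using assms unfolding A_space_def by (auto simp: left_diff_distrib intro: summable_diff)

lemma pser_diff:
  assumes "a \<in> A_space" "b \<in> A_space" "norm z < 1"
  shows "pser (\<lambda>k. a k - b k) z = pser a z - pser b z"
  using assms unfolding A_space_def pser_def
  by (simp add: left_diff_distrib suminf_diff)


lemma coeff_conv:
  assumes V: "V \<subseteq> A_space" and G: "\<And>n. G n \<in> V" and f: "f \<in> V"
    and lim: "loc_unif_lim G f" and r: "0 < r" "r < 1" and e: "e > 0"
  shows "eventually (\<lambda>n. \<forall>k. norm (G n k - f k) \<le> e / r ^ k) sequentially"
proof -
  have "uniform_limit (cball 0 r) (\<lambda>n z. pser (G n) z) (pser f) sequentially"
    using lim r by (auto simp: loc_unif_lim_def)
  then have "eventually (\<lambda>n. \<forall>z\<in>cball 0 r. dist (pser (G n) z) (pser f z) < e) sequentially"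
    using e by (auto simp: uniform_limit_iff)
  then show ?thesis
  proof eventually_elim
    case (elim n)
    show ?case
    proof
      fix k
      have a: "(\<lambda>k. G n k - f k) \<in> A_space" using V G f by (intro A_space_diff) auto
      show "norm (G n k - f k) \<le> e / r ^ k"
      proof (rule coeff_bound[OF a r])
        fix z :: complex assume z: "norm z = r"
        have "pser (\<lambda>k. G n k - f k) z = pser (G n) z - pser f z"
          using V G f z r by (intro pser_diff) auto
        then show "norm (pser (\<lambda>k. G n k - f k) z) \<le> e"
          using elim[rule_format, of z] z by (simp add: dist_norm)
      qed
    qed
  qed
qed

lemma key:
  assumes V: "V \<subseteq> A_space" and cV: "compact_A V" and g: "g \<in> A_cl"
    and nz: "\<And>f x. f \<in> V \<Longrightarrow> norm x \<le> 1 \<Longrightarrow> pser (hadamard f g) x \<noteq> 0"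
  shows "\<exists>\<rho>>1. \<forall>f\<in>V. \<forall>x. norm x \<le> \<rho> \<longrightarrow> pser (hadamard f g) x \<noteq> 0"
proof (rule ccontr)
  assume contra: "\<not> ?thesis"
  obtain R where R: "R > 1" "\<And>z. norm z < R \<Longrightarrow> summable (\<lambda>k. g k * z ^ k)"
    using g by (auto simp: A_cl_def)
  define q where "q = min ((1 + R) / 2) 2"
  have q: "1 < q" "q < R" using R(1) unfolding q_def min_def by auto
  obtain Cg where Cg: "\<And>k. norm (g k) * q ^ k \<le> Cg"
    using summable_coeff_bound[OF R(2)[of "of_real q"]] q by auto
  define r where "r = (1 + 1 / q) / 2"
  have r: "0 < r" "r < 1" "r * q > 1" using q by (auto simp: r_def field_simps)
  define \<theta> where "\<theta> = r * q"
  define d where "d = (\<theta> - 1) / 2"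
  have d: "d > 0" "(1 + d) / \<theta> < 1" "(1 + d) / \<theta> \<ge> 0" using r by (auto simp: d_def \<theta>_def field_simps)
  have "\<forall>n::nat. \<exists>f x. f \<in> V \<and> norm x \<le> 1 + d / (real n + 1) \<and> pser (hadamard f g) x = 0"
  proof
    fix n :: nat
    have "1 + d / (real n + 1) > 1" using d by auto
    then show "\<exists>f x. f \<in> V \<and> norm x \<le> 1 + d / (real n + 1) \<and> pser (hadamard f g) x = 0"
      using contra by blast
  qed
  then obtain F X where FX: "\<And>n. F n \<in> V" "\<And>n. norm (X n) \<le> 1 + d / (real n + 1)"
      "\<And>n. pser (hadamard (F n) g) (X n) = 0"
    by metis
  have "\<forall>n. X n \<in> cball 0 (1 + d)"
  proof
    fix n
    have "d / (real n + 1) \<le> d" using d by (auto simp: field_simps)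
    then show "X n \<in> cball 0 (1 + d)" using FX(2)[of n] by auto
  qed
  then obtain x0 s2 where s2: "x0 \<in> cball 0 (1 + d)" "strict_mono s2" "(X \<circ> s2) \<longlonglongrightarrow> x0"
    using seq_compactE[OF compact_imp_seq_compact[OF compact_cball]] by metis
  obtain f s1 where s1: "f \<in> V" "strict_mono s1" "loc_unif_lim (F \<circ> s2 \<circ> s1) f"
    using cV FX(1) unfolding compact_A_def by (metis comp_apply)
  define G where "G = F \<circ> s2 \<circ> s1"
  define Y where "Y = X \<circ> s2 \<circ> s1"
  have GV: "\<And>n. G n \<in> V" using FX(1) by (simp add: G_def)
  have Ylim: "Y \<longlonglongrightarrow> x0" unfolding Y_def
    using LIMSEQ_subseq_LIMSEQ[OF s2(3) s1(2)] by (simp add: o_assoc)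
  have Yb: "norm (Y n) \<le> 1 + d / (real n + 1)" for n
  proof -
    have "strict_mono (s2 \<circ> s1)" using s1(2) s2(2) by (simp add: strict_mono_o)
    then have "n \<le> (s2 \<circ> s1) n" by (rule seq_suble)
    then have "d / (real ((s2 \<circ> s1) n) + 1) \<le> d / (real n + 1)"
      using d by (intro divide_left_mono) auto
    then show ?thesis using FX(2)[of "(s2 \<circ> s1) n"] by (simp add: Y_def)
  qed
  have Yb2: "norm (Y n) \<le> 1 + d" for n
  proof -
    have "d / (real n + 1) \<le> d" using d by (auto simp: field_simps)
    then show ?thesis using Yb[of n] by auto
  qed
  have x0: "norm x0 \<le> 1"
  proof (rule tendsto_le[OF _ _ tendsto_norm[OF Ylim]])
    show "((\<lambda>n. 1 + d / (real n + 1)) \<longlongrightarrow> 1) sequentially" by real_asymp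
    show "eventually (\<lambda>n. norm (Y n) \<le> 1 + d / (real n + 1)) sequentially" using Yb by auto
  qed simp
  have zero: "\<And>n. pser (hadamard (G n) g) (Y n) = 0" using FX(3) by (simp add: G_def Y_def)
  have Glim: "loc_unif_lim G f" using s1(3) by (simp add: G_def)
  have Vs: "V \<subseteq> A_space" by fact
  obtain Cf where Cf: "\<And>k. norm (f k) * r ^ k \<le> Cf"
    using summable_coeff_bound[of f "of_real r"] s1(1) V r by (force simp: A_space_def)
  have ev1: "eventually (\<lambda>n. \<forall>k. norm (G n k - f k) \<le> 1 / r ^ k) sequentially"
    by (rule coeff_conv[OF V GV s1(1) Glim r(1,2)]) simp
  have Gbound: "eventually (\<lambda>n. \<forall>k. norm (G n k) \<le> (1 + Cf) / r ^ k) sequentially"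
    using ev1
  proof eventually_elim
    case (elim n)
    show ?case
    proof
      fix k
      have "norm (G n k) \<le> norm (G n k - f k) + norm (f k)" using norm_triangle_ineq[of "G n k - f k" "f k"] by simp
      also have "\<dots> \<le> 1 / r ^ k + Cf / r ^ k"
        using elim[rule_format, of k] Cf[of k] r by (intro add_mono) (auto simp: field_simps)
      finally show "norm (G n k) \<le> (1 + Cf) / r ^ k" by (simp add: add_divide_distrib)
    qed
  qed
  have Gk: "(\<lambda>n. G n k) \<longlonglongrightarrow> f k" for k
  proof (rule tendstoI)
    fix e :: real assume e: "e > 0"
    have "eventually (\<lambda>n. \<forall>j. norm (G n j - f j) \<le> (e * r ^ k / 2) / r ^ j) sequentially"
      by (rule coeff_conv[OF V GV s1(1) Glim r(1,2)]) (use e r in auto)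
    then show "eventually (\<lambda>n. dist (G n k) (f k) < e) sequentially"
    proof eventually_elim
      case (elim n)
      then have "norm (G n k - f k) \<le> (e * r ^ k / 2) / r ^ k" by blast
      then have "norm (G n k - f k) \<le> e / 2" using r by auto
      then show ?case using e by (simp add: dist_norm)
    qed
  qed
  define a where "a = (\<lambda>k n. G n k * g k * Y n ^ k)"
  define b where "b = (\<lambda>k. f k * g k * x0 ^ k)"
  define M where "M = (\<lambda>k. ((1 + Cf) * Cg) * ((1 + d) / \<theta>) ^ k)"
  have T: "eventually (\<lambda>n. summable (\<lambda>k. norm (a k n))) sequentially \<and>
           summable (\<lambda>n. norm (b n)) \<and>
           ((\<lambda>n. suminf (\<lambda>k. a k n)) \<longlongrightarrow> suminf b) sequentially"
  proof (rule tannerys_theorem)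
    show "((\<lambda>n. a k n) \<longlongrightarrow> b k) sequentially" for k
      unfolding a_def b_def by (intro tendsto_intros Gk Ylim)
    show "summable M" unfolding M_def using d by (intro summable_mult summable_geometric) auto
    show "eventually (\<lambda>(k, n). norm (a k n) \<le> M k) (at_top \<times>\<^sub>F sequentially)"
      unfolding eventually_prod_filter
    proof (intro exI conjI allI impI)
      show "eventually (\<lambda>_. True) at_top" by simp
      show "eventually (\<lambda>n. \<forall>k. norm (G n k) \<le> (1 + Cf) / r ^ k) sequentially" by (rule Gbound)
      fix k n assume "\<forall>k. norm (G n k) \<le> (1 + Cf) / r ^ k"
      then have h1: "norm (G n k) \<le> (1 + Cf) / r ^ k" by blast
      have h2: "norm (g k) \<le> Cg / q ^ k" using Cg[of k] q by (simp add: field_simps)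
      have h3: "norm (Y n ^ k) \<le> (1 + d) ^ k"
        unfolding norm_power by (intro power_mono Yb2) auto
      have "norm (a k n) = norm (G n k) * norm (g k) * norm (Y n ^ k)"
        by (simp add: a_def norm_mult)
      also have "\<dots> \<le> ((1 + Cf) / r ^ k) * (Cg / q ^ k) * (1 + d) ^ k"
      proof -
        have "0 \<le> Cf" using Cf[of 0] by (metis norm_ge_zero order_trans power_0 mult_1_right)
        moreover have "0 \<le> Cg" using Cg[of 0] by (metis norm_ge_zero order_trans power_0 mult_1_right)
        ultimately show ?thesis using r q by (intro mult_mono h1 h2 h3) auto
      qed
      also have "\<dots> = M k"
        by (simp add: M_def \<theta>_def power_divide power_mult_distrib)
      finally show "case (k, n) of (k, n) \<Rightarrow> norm (a k n) \<le> M k" by simp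
    qed
  qed simp
  have "(\<lambda>n. suminf (\<lambda>k. a k n)) = (\<lambda>n. 0)"
    using zero by (simp add: a_def pser_def hadamard_def)
  then have "suminf b = 0" using T LIMSEQ_unique[OF tendsto_const] by metis
  moreover have "suminf b = pser (hadamard f g) x0" by (simp add: b_def pser_def hadamard_def)
  ultimately show False using nz[OF s1(1) x0] by simp
qed


lemma pser_Pop: "pser (hadamard f (Pop x g)) z = pser (hadamard f g) (x * z)"
  by (simp add: pser_def hadamard_def Pop_def power_mult_distrib mult_ac)

lemma pser_Pop2: "pser (hadamard (Pop x g) h) z = pser (hadamard g h) (x * z)"
  by (simp add: pser_def hadamard_def Pop_def power_mult_distrib mult_ac)

theorem theorem3:
  assumes "V \<subseteq> A0" and "compact_A V" and "complete_set (dualT V)"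
  shows "dual (dual V) = perp (dualT V)"
proof
  show "perp (dualT V) \<subseteq> dual (dual V)"
  proof
    fix h assume h: "h \<in> perp (dualT V)"
    have "pser (hadamard g h) z \<noteq> 0" if g: "g \<in> dual V" and z: "norm z < 1" for g z
    proof -
      have gA: "g \<in> A0" using g by (simp add: dual_def)
      have "Pop z g \<in> A0_cl"
      proof -
        define R where "R = (if z = 0 then 2 else 1 / norm z)"
        have "R > 1" using z by (auto simp: R_def field_simps)
        moreover have "summable (\<lambda>k. Pop z g k * w ^ k)" if "norm w < R" for w
        proof -
          have "norm (z * w) < 1"
          proof (cases "z = 0")
            case False
            then have "norm w < 1 / norm z" using that by (simp add: R_def)
            then show ?thesis using False by (simp add: norm_mult field_simps)
          qed simp
          then have "summable (\<lambda>k. g k * (z * w) ^ k)" using gA by (auto simp: A0_def A_space_def)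
          then show ?thesis by (simp add: Pop_def power_mult_distrib mult_ac)
        qed
        ultimately show ?thesis using gA by (auto simp: A0_cl_def A_cl_def A0_def Pop_def)
      qed
      moreover have "\<forall>f\<in>V. pser (hadamard f (Pop z g)) 1 \<noteq> 0"
        using g z by (auto simp: dual_def pser_Pop)
      ultimately have "Pop z g \<in> dualT V" by (simp add: dualT_def)
      then have "pser (hadamard (Pop z g) h) 1 \<noteq> 0" using h by (simp add: perp_def)
      then show ?thesis by (simp add: pser_Pop2)
    qed
    then show "h \<in> dual (dual V)" using h by (auto simp: dual_def perp_def)
  qed
next
  show "dual (dual V) \<subseteq> perp (dualT V)"
  proof
    fix h assume h: "h \<in> dual (dual V)"
    have VA: "V \<subseteq> A_space" using assms(1) by (auto simp: A0_def)
    have "pser (hadamard g h) 1 \<noteq> 0" if g: "g \<in> dualT V" for g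
    proof -
      have gcl: "g \<in> A_cl" "g 0 = 1" using g by (auto simp: dualT_def A0_cl_def)
      obtain R where R: "R > 1" "\<And>z. norm z < R \<Longrightarrow> summable (\<lambda>k. g k * z ^ k)"
        using gcl by (auto simp: A_cl_def)
      have nz: "pser (hadamard f g) x \<noteq> 0" if "f \<in> V" "norm x \<le> 1" for f x
      proof -
        have "Pop x g \<in> dualT V" using assms(3) g that(2) by (auto simp: complete_set_def)
        then have "pser (hadamard f (Pop x g)) 1 \<noteq> 0" using that(1) by (auto simp: dualT_def)
        then show ?thesis by (simp add: pser_Pop)
      qed
      obtain \<rho> where \<rho>: "\<rho> > 1" "\<And>f x. f \<in> V \<Longrightarrow> norm x \<le> \<rho> \<Longrightarrow> pser (hadamard f g) x \<noteq> 0"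
        using key[OF VA assms(2) gcl(1) nz] by blast
      define \<sigma> where "\<sigma> = min \<rho> R"
      have \<sigma>: "\<sigma> > 1" "\<sigma> \<le> \<rho>" "\<sigma> \<le> R" using \<rho> R by (auto simp: \<sigma>_def)
      define g' where "g' = Pop (of_real \<sigma>) g"
      have "g' \<in> A0"
      proof -
        have "summable (\<lambda>k. g' k * z ^ k)" if "norm z < 1" for z
        proof -
          have "norm (of_real \<sigma> * z) < R"
          proof -
            have "norm (of_real \<sigma> * z) = \<sigma> * norm z" using \<sigma> by (simp add: norm_mult)
            also have "\<dots> < \<sigma>" using that \<sigma> by simp
            finally show ?thesis using \<sigma> by simp
          qed
          then have "summable (\<lambda>k. g k * (of_real \<sigma> * z) ^ k)" by (rule R(2))
          then show ?thesis by (simp add: g'_def Pop_def power_mult_distrib mult_ac)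
        qed
        then show ?thesis using gcl by (simp add: A0_def A_space_def g'_def Pop_def)
      qed
      moreover have "\<forall>f\<in>V. \<forall>z. norm z < 1 \<longrightarrow> pser (hadamard f g') z \<noteq> 0"
      proof (intro ballI allI impI)
        fix f z assume f: "f \<in> V" and z: "norm (z::complex) < 1"
        have "norm (of_real \<sigma> * z) \<le> \<rho>"
        proof -
          have "norm (of_real \<sigma> * z) = \<sigma> * norm z" using \<sigma> by (simp add: norm_mult)
          also have "\<dots> \<le> \<sigma>" using z \<sigma> by simp
          finally show ?thesis using \<sigma> by simp
        qed
        then show "pser (hadamard f g') z \<noteq> 0" using \<rho>(2)[OF f] by (simp add: g'_def pser_Pop)
      qed
      ultimately have "g' \<in> dual V" by (simp add: dual_def)
      moreover have "norm (1 / complex_of_real \<sigma>) < 1" using \<sigma> by (simp add: norm_divide)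
      ultimately have "pser (hadamard g' h) (1 / of_real \<sigma>) \<noteq> 0" using h by (simp add: dual_def)
      then show ?thesis using \<sigma> by (simp add: g'_def pser_Pop2)
    qed
    then show "h \<in> perp (dualT V)" using h by (auto simp: dual_def perp_def)
  qed
qed

end
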